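(* Let $g:\mathbb{R}\to\mathbb{R}$ be a periodic $C^1$ function of period $1$ with finitely many critical points in $[0,1]$. Then there exist a constant $C>0$ and, for every $\epsilon>0$, a number $\delta=\delta(\epsilon)>0$ with $\delta(\epsilon)\to 0$ as $\epsilon\to0$, such that for every $\epsilon>0$ the set $$A=\{(x,y)\in[0,1]^2 : |g(x)-g(y)|<\epsilon\}$$ can be covered by $N\le C/\delta$ squares with horizontal and vertical sides of length $\delta$.
   Context: A critical point of $g$ is a point where $g'$ vanishes. *)

theory Defs
  imports "HOL-Analysis.Analysis"
begin

definition square :: "real \<times> real \<Rightarrow> real \<Rightarrow> (real \<times> real) set" where
  "square p d = {fst p .. fst p + d} \<times> {snd p .. snd p + d}"

end

theory Submission
  imports Defs
begin

lemma sign_piece: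
  fixes g :: "real \<Rightarrow> real"
  assumes diff: "\<forall>x. g differentiable at x"
    and C1: "continuous_on UNIV (deriv g)"
    and st: "s \<le> t" and nz: "\<forall>z. s < z \<and> z < t \<longrightarrow> deriv g z \<noteq> 0"
  shows "\<exists>\<sigma>::real. (\<sigma> = 1 \<or> \<sigma> = -1) \<and> (\<forall>x x'. s \<le> x \<longrightarrow> x < x' \<longrightarrow> x' \<le> t \<longrightarrow> \<sigma> * (g x' - g x) > 0)"
proof (cases "s = t")
  case True then show ?thesis by (intro exI[of _ 1]) auto
next
  case False
  hence lt: "s < t" using st by simp
  define m where "m = (s + t) / 2"
  have m: "s < m" "m < t" using lt by (auto simp: m_def)
  define \<sigma> where "\<sigma> = sgn (deriv g m)"
  have dm: "deriv g m \<noteq> 0" using nz m by auto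
  have sig: "\<sigma> = 1 \<or> \<sigma> = -1" using dm by (auto simp: \<sigma>_def sgn_real_def)
  have hm: "\<sigma> * deriv g m > 0" using dm by (auto simp: \<sigma>_def sgn_real_def)
  have cont: "continuous_on A (\<lambda>w. \<sigma> * deriv g w)" for A
    by (intro continuous_intros continuous_on_subset[OF C1]) auto
  have pos: "\<sigma> * deriv g z > 0" if z: "s < z" "z < t" for z
  proof (rule ccontr)
    assume "\<not> ?thesis"
    hence hz: "\<sigma> * deriv g z \<le> 0" by simp
    show False
    proof (cases "z \<le> m")
      case True
      from IVT'[of "\<lambda>w. \<sigma> * deriv g w" z 0 m, OF hz _ True cont] hm
      obtain w where "z \<le> w" "w \<le> m" "\<sigma> * deriv g w = 0" by auto
      thus False using nz z m sig by auto
    next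
      case False
      from IVT2'[of "\<lambda>w. \<sigma> * deriv g w" z 0 m, OF hz _ _ cont] hm False
      obtain w where "m \<le> w" "w \<le> z" "\<sigma> * deriv g w = 0" by auto
      thus False using nz z m sig by auto
    qed
  qed
  have "\<forall>x x'. s \<le> x \<longrightarrow> x < x' \<longrightarrow> x' \<le> t \<longrightarrow> \<sigma> * (g x' - g x) > 0"
  proof (intro allI impI)
    fix x x' assume h: "s \<le> x" "x < x'" "x' \<le> t"
    have "\<And>w. DERIV g w :> deriv g w" using diff DERIV_deriv_iff_real_differentiable by blast
    from MVT2[OF h(2) this] obtain z where z: "x < z" "z < x'" "g x' - g x = (x' - x) * deriv g z" by blast
    have pz: "\<sigma> * deriv g z > 0" using pos z h by auto
    have "\<sigma> * (g x' - g x) = \<sigma> * ((x' - x) * deriv g z)" by (simp only: z(3))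
    also have "\<dots> = (x' - x) * (\<sigma> * deriv g z)" by (simp only: ac_simps)
    also have "\<dots> > 0" using pz h by simp
    finally show "\<sigma> * (g x' - g x) > 0" .
  qed
  thus ?thesis using sig by blast
qed

lemma sep_piece:
  fixes g :: "real \<Rightarrow> real"
  assumes cont: "continuous_on UNIV g" and inj: "inj_on g {s..t}" and d: "d > 0"
  shows "\<exists>\<eta>>0. \<forall>x\<in>{s..t}. \<forall>x'\<in>{s..t}. d \<le> \<bar>x - x'\<bar> \<longrightarrow> \<eta> \<le> \<bar>g x - g x'\<bar>"
proof -
  define K where "K = ({s..t} \<times> {s..t}) \<inter> {p. d \<le> \<bar>fst p - snd p\<bar>}"
  show ?thesis
  proof (cases "K = {}")
    case True
    then show ?thesis by (intro exI[of _ 1]) (auto simp: K_def)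
  next
    case False
    have cK: "compact K" unfolding K_def
      by (intro compact_Int_closed compact_Times compact_Icc closed_Collect_le continuous_intros)
    have cf: "continuous_on K (\<lambda>p. \<bar>g (fst p) - g (snd p)\<bar>)"
      by (intro continuous_intros continuous_on_compose2[OF cont]) auto
    from continuous_attains_inf[OF cK False cf] obtain p where p: "p \<in> K"
      "\<forall>q\<in>K. \<bar>g (fst p) - g (snd p)\<bar> \<le> \<bar>g (fst q) - g (snd q)\<bar>" by blast
    have pK: "fst p \<in> {s..t}" "snd p \<in> {s..t}" "d \<le> \<bar>fst p - snd p\<bar>" using p(1) by (auto simp: K_def)
    hence "fst p \<noteq> snd p" using d by auto
    hence "g (fst p) \<noteq> g (snd p)" using inj_onD[OF inj _ pK(1,2)] by blast
    hence pos: "\<bar>g (fst p) - g (snd p)\<bar> > 0" by simp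
    have "\<bar>g (fst p) - g (snd p)\<bar> \<le> \<bar>g x - g x'\<bar>"
      if "x \<in> {s..t}" "x' \<in> {s..t}" "d \<le> \<bar>x - x'\<bar>" for x x'
    proof -
      have "(x, x') \<in> K" using that by (simp add: K_def)
      from bspec[OF p(2) this] show ?thesis by simp
    qed
    thus ?thesis using pos by (intro exI[of _ "\<bar>g (fst p) - g (snd p)\<bar>"]) blast
  qed
qed

lemma finite_min_eta:
  assumes "finite F" "\<forall>p\<in>F. \<exists>\<eta>::real>0. Q p \<eta>" "\<And>p \<eta> \<eta>'. Q p \<eta> \<Longrightarrow> 0 < \<eta>' \<Longrightarrow> \<eta>' \<le> \<eta> \<Longrightarrow> Q p \<eta>'"
  shows "\<exists>\<eta>>0. \<forall>p\<in>F. Q p \<eta>"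
  using assms(1,2)
proof (induction F rule: finite_induct)
  case empty then show ?case by (intro exI[of _ 1]) auto
next
  case (insert x F)
  then obtain \<eta>1 where e1: "\<eta>1 > 0" "\<forall>p\<in>F. Q p \<eta>1" by auto
  from insert obtain \<eta>2 where e2: "\<eta>2 > 0" "Q x \<eta>2" by auto
  show ?case using e1 e2 assms(3)
    by (intro exI[of _ "min \<eta>1 \<eta>2"]) auto
qed

lemma order_lemma:
  fixes ga ga' gb gb' x x' y y' sa sb e :: real
  assumes "sa = 1 \<or> sa = -1" "sb = 1 \<or> sb = -1" "sa * (ga' - ga) > 2 * e"
    "\<bar>ga - gb\<bar> < e" "\<bar>ga' - gb'\<bar> < e"
    "y < y' \<Longrightarrow> sb * (gb' - gb) > 0" "y' < y \<Longrightarrow> sb * (gb - gb') > 0" "y = y' \<Longrightarrow> gb = gb'"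
  shows "sa * sb * (y' - y) > 0"
proof -
  have A: "sa * (gb' - gb) > 0" using assms(1,3,4,5) by (auto simp: abs_if split: if_splits)
  consider "y < y'" | "y' < y" | "y = y'" by linarith
  thus ?thesis
  proof cases
    case 1 thus ?thesis using assms(1,2,6) A by (auto simp: mult_less_0_iff zero_less_mult_iff)
  next
    case 2 thus ?thesis using assms(1,2,7) A by (auto simp: mult_less_0_iff zero_less_mult_iff)
  next
    case 3 thus ?thesis using assms(8) A by auto
  qed
qed

lemma floor_eq_close:
  fixes u v :: real
  assumes "\<lfloor>u\<rfloor> = \<lfloor>v\<rfloor>" shows "\<bar>u - v\<bar> < 1"
  using floor_correct[of u] floor_correct[of v] assms by linarith

lemma floor_div_close:
  fixes u v h :: real
  assumes "\<lfloor>u/h\<rfloor> = \<lfloor>v/h\<rfloor>" "h > 0" shows "\<bar>u - v\<bar> < h"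
proof -
  have "\<bar>u/h - v/h\<bar> < 1" by (rule floor_eq_close[OF assms(1)])
  hence "\<bar>u - v\<bar> / h < 1" using assms(2) by (simp add: diff_divide_distrib[symmetric])
  thus ?thesis using assms(2) by (simp add: divide_less_eq)
qed

lemma close_one:
  fixes g :: "real \<Rightarrow> real"
  assumes sa: "sa = 1 \<or> sa = -1" and sb: "sb = 1 \<or> sb = -1"
    and signa: "\<forall>x x'. a1 \<le> x \<longrightarrow> x < x' \<longrightarrow> x' \<le> a2 \<longrightarrow> sa * (g x' - g x) > 0"
    and signb: "\<forall>x x'. b1 \<le> x \<longrightarrow> x < x' \<longrightarrow> x' \<le> b2 \<longrightarrow> sb * (g x' - g x) > 0"
    and gooda: "\<forall>x\<in>{a1..a2}. \<forall>x'\<in>{a1..a2}. d/2 \<le> \<bar>x - x'\<bar> \<longrightarrow> 2*e < \<bar>g x - g x'\<bar>"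
    and d: "d > 0"
    and x: "x1 \<in> {a1..a2}" "x2 \<in> {a1..a2}" and y: "y1 \<in> {b1..b2}" "y2 \<in> {b1..b2}"
    and A: "\<bar>g x1 - g y1\<bar> < e" "\<bar>g x2 - g y2\<bar> < e"
    and fl: "\<bar>(x1 + sa * sb*y1) - (x2 + sa * sb*y2)\<bar> < d/2"
  shows "\<not> (d/2 \<le> x2 - x1)"
proof
  assume h: "d/2 \<le> x2 - x1"
  have lt: "x1 < x2" using h d by linarith
  have s1: "sa * (g x2 - g x1) > 0" using signa x lt by auto
  have "d/2 \<le> \<bar>x1 - x2\<bar>" using h by linarith
  hence "2*e < \<bar>g x1 - g x2\<bar>" using gooda x by blast
  hence big: "sa * (g x2 - g x1) > 2*e" using s1 sa by (auto simp: abs_if split: if_splits)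
  have "sa * sb * (y2 - y1) > 0"
  proof (rule order_lemma[OF sa sb big A(1) A(2)])
    show "y1 < y2 \<Longrightarrow> sb * (g y2 - g y1) > 0" using signb y by auto
    show "y2 < y1 \<Longrightarrow> sb * (g y1 - g y2) > 0" using signb y by auto
    show "y1 = y2 \<Longrightarrow> g y1 = g y2" by simp
  qed
  hence gt: "(x2 + sa * sb*y2) - (x1 + sa * sb*y1) > d/2" using h by (simp add: algebra_simps)
  thus False using gt fl by linarith
qed

lemma close_both:
  fixes g :: "real \<Rightarrow> real"
  assumes sa: "sa = 1 \<or> sa = -1" and sb: "sb = 1 \<or> sb = -1"
    and signa: "\<forall>x x'. a1 \<le> x \<longrightarrow> x < x' \<longrightarrow> x' \<le> a2 \<longrightarrow> sa * (g x' - g x) > 0"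
    and signb: "\<forall>x x'. b1 \<le> x \<longrightarrow> x < x' \<longrightarrow> x' \<le> b2 \<longrightarrow> sb * (g x' - g x) > 0"
    and gooda: "\<forall>x\<in>{a1..a2}. \<forall>x'\<in>{a1..a2}. d/2 \<le> \<bar>x - x'\<bar> \<longrightarrow> 2*e < \<bar>g x - g x'\<bar>"
    and goodb: "\<forall>x\<in>{b1..b2}. \<forall>x'\<in>{b1..b2}. d/2 \<le> \<bar>x - x'\<bar> \<longrightarrow> 2*e < \<bar>g x - g x'\<bar>"
    and d: "d > 0"
    and x: "x1 \<in> {a1..a2}" "x2 \<in> {a1..a2}" and y: "y1 \<in> {b1..b2}" "y2 \<in> {b1..b2}"
    and A: "\<bar>g x1 - g y1\<bar> < e" "\<bar>g x2 - g y2\<bar> < e"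
    and fl: "\<bar>(x1 + sa * sb*y1) - (x2 + sa * sb*y2)\<bar> < d/2"
  shows "\<bar>x1 - x2\<bar> < d/2 \<and> \<bar>y1 - y2\<bar> < d/2"
proof -
  have A': "\<bar>g y1 - g x1\<bar> < e" "\<bar>g y2 - g x2\<bar> < e" using A by auto
  have fl': "\<bar>(y1 + sb * sa*x1) - (y2 + sb * sa*x2)\<bar> < d/2"
    using sa sb fl by (elim disjE) (simp_all add: algebra_simps abs_minus_commute)
  have fl2: "\<bar>(x2 + sa * sb*y2) - (x1 + sa * sb*y1)\<bar> < d/2" using fl by (simp add: abs_minus_commute)
  have fl2': "\<bar>(y2 + sb * sa*x2) - (y1 + sb * sa*x1)\<bar> < d/2" using fl' by (simp add: abs_minus_commute)
  have "\<not> (d/2 \<le> x2 - x1)"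
    by (rule close_one[OF sa sb signa signb gooda d x y A fl])
  moreover have "\<not> (d/2 \<le> x1 - x2)"
    by (rule close_one[OF sa sb signa signb gooda d x(2,1) y(2,1) A(2,1) fl2])
  moreover have "\<not> (d/2 \<le> y2 - y1)"
    by (rule close_one[OF sb sa signb signa goodb d y x A' fl'])
  moreover have "\<not> (d/2 \<le> y1 - y2)"
    by (rule close_one[OF sb sa signb signa goodb d y(2,1) x(2,1) A'(2,1) fl2'])
  ultimately show ?thesis unfolding abs_less_iff by linarith
qed

theorem lemma2p1:
  fixes g :: "real \<Rightarrow> real"
  assumes periodic: "\<forall>x. g (x + 1) = g x"
    and diff: "\<forall>x. g differentiable at x"
    and C1: "continuous_on UNIV (deriv g)"
    and crit: "finite {x \<in> {0..1}. deriv g x = 0}"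
  shows "\<exists>C::real. C > 0 \<and> (\<exists>\<delta> :: real \<Rightarrow> real.
           (\<forall>\<epsilon>>0. \<delta> \<epsilon> > 0) \<and> (\<delta> \<longlongrightarrow> 0) (at_right 0) \<and>
           (\<forall>\<epsilon>>0. \<exists>S :: (real \<times> real) set. finite S \<and> real (card S) \<le> C / \<delta> \<epsilon> \<and>
               {(x, y). x \<in> {0..1} \<and> y \<in> {0..1} \<and> \<bar>g x - g y\<bar> < \<epsilon>}
                 \<subseteq> (\<Union>p\<in>S. square p (\<delta> \<epsilon>))))"
proof -
  have gcont: "continuous_on UNIV g"
    by (meson continuous_at_imp_continuous_on differentiable_imp_continuous_within diff)
  define T where "T = {x \<in> {0..1}. deriv g x = 0} \<union> {0, 1}"
  have finT: "finite T" using crit by (simp add: T_def)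
  have T01: "T \<subseteq> {0..1}" by (auto simp: T_def)
  define Pc where "Pc = {p \<in> T \<times> T. fst p \<le> snd p \<and> (\<forall>u\<in>T. \<not> (fst p < u \<and> u < snd p))}"
  have finPc: "finite Pc" unfolding Pc_def using finT by (auto intro: finite_subset[of _ "T \<times> T"])
  have P00: "(0, 0) \<in> Pc" by (auto simp: Pc_def T_def)
  have cardPc: "card Pc > 0" using finPc P00 card_gt_0_iff by blast
  have nz: "\<forall>z. fst p < z \<and> z < snd p \<longrightarrow> deriv g z \<noteq> 0" if "p \<in> Pc" for p
  proof (intro allI impI)
    fix z assume z: "fst p < z \<and> z < snd p"
    have "fst p \<in> T" "snd p \<in> T" using that by (auto simp: Pc_def)
    hence "z \<in> {0..1}" using z T01 by force
    moreover have "z \<notin> T" using that z by (auto simp: Pc_def)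
    ultimately show "deriv g z \<noteq> 0" by (auto simp: T_def)
  qed
  have "\<forall>p\<in>Pc. \<exists>\<sigma>::real. (\<sigma> = 1 \<or> \<sigma> = -1) \<and> (\<forall>x x'. fst p \<le> x \<longrightarrow> x < x' \<longrightarrow> x' \<le> snd p \<longrightarrow> \<sigma> * (g x' - g x) > 0)"
  proof
    fix p assume p: "p \<in> Pc"
    hence "fst p \<le> snd p" by (auto simp: Pc_def)
    from sign_piece[OF diff C1 this nz[OF p]] show "\<exists>\<sigma>::real. (\<sigma> = 1 \<or> \<sigma> = -1) \<and> (\<forall>x x'. fst p \<le> x \<longrightarrow> x < x' \<longrightarrow> x' \<le> snd p \<longrightarrow> \<sigma> * (g x' - g x) > 0)" .
  qed
  from bchoice[OF this] obtain sg where sg: "\<forall>p\<in>Pc. (sg p = 1 \<or> sg p = -1) \<and> (\<forall>x x'. fst p \<le> x \<longrightarrow> x < x' \<longrightarrow> x' \<le> snd p \<longrightarrow> sg p * (g x' - g x) > 0)"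
    by blast
  have injp: "inj_on g {fst p..snd p}" if p: "p \<in> Pc" for p
  proof (rule inj_onI)
    fix x x' assume h: "x \<in> {fst p..snd p}" "x' \<in> {fst p..snd p}" "g x = g x'"
    show "x = x'"
    proof (rule ccontr)
      assume "x \<noteq> x'"
      hence "x < x' \<or> x' < x" by linarith
      thus False using sg p h by fastforce
    qed
  qed
  have cover: "\<exists>p\<in>Pc. x \<in> {fst p..snd p}" if x: "x \<in> {0..1}" for x
  proof (cases "x \<in> T")
    case True
    then show ?thesis by (intro bexI[of _ "(x, x)"]) (auto simp: Pc_def)
  next
    case False
    hence x01: "0 < x" "x < 1" using x by (auto simp: T_def)
    define L where "L = {u \<in> T. u < x}"
    define U where "U = {u \<in> T. x < u}"
    have fL: "finite L" "L \<noteq> {}" using finT x01 by (auto simp: L_def T_def)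
    have fU: "finite U" "U \<noteq> {}" using finT x01 by (auto simp: U_def T_def)
    have "Max L \<in> L" "Min U \<in> U" using fL fU by auto
    hence mm: "Max L \<in> T" "Max L < x" "Min U \<in> T" "x < Min U" by (auto simp: L_def U_def)
    have "\<forall>u\<in>T. \<not> (Max L < u \<and> u < Min U)"
    proof (intro ballI notI)
      fix u assume u: "u \<in> T" "Max L < u \<and> u < Min U"
      have "u \<noteq> x" using u False by auto
      hence "u < x \<or> x < u" by linarith
      thus False
      proof
        assume "u < x" hence "u \<in> L" using u by (auto simp: L_def)
        thus False using fL u by (meson Max_ge leD)
      next
        assume "x < u" hence "u \<in> U" using u by (auto simp: U_def)
        thus False using fU u by (meson Min_le leD)
      qed
    qed
    thus ?thesis using mm by (intro bexI[of _ "(Max L, Min U)"]) (auto simp: Pc_def)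
  qed
  define Pgood where "Pgood d e \<longleftrightarrow> (\<forall>p\<in>Pc. \<forall>x\<in>{fst p..snd p}. \<forall>x'\<in>{fst p..snd p}. d/2 \<le> \<bar>x - x'\<bar> \<longrightarrow> 2*e < \<bar>g x - g x'\<bar>)" for d e :: real
  have Pex: "\<exists>e>0. Pgood d e" if d: "d > 0" for d
  proof -
    have "\<exists>\<eta>>0. \<forall>p\<in>Pc. \<forall>x\<in>{fst p..snd p}. \<forall>x'\<in>{fst p..snd p}. d/2 \<le> \<bar>x - x'\<bar> \<longrightarrow> \<eta> \<le> \<bar>g x - g x'\<bar>"
    proof (rule finite_min_eta[OF finPc, where Q = "\<lambda>p \<eta>. \<forall>x\<in>{fst p..snd p}. \<forall>x'\<in>{fst p..snd p}. d/2 \<le> \<bar>x - x'\<bar> \<longrightarrow> \<eta> \<le> \<bar>g x - g x'\<bar>"])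
      show "\<forall>p\<in>Pc. \<exists>\<eta>>0. \<forall>x\<in>{fst p..snd p}. \<forall>x'\<in>{fst p..snd p}. d/2 \<le> \<bar>x - x'\<bar> \<longrightarrow> \<eta> \<le> \<bar>g x - g x'\<bar>"
      proof
        fix p assume p: "p \<in> Pc"
        have "d/2 > 0" using d by simp
        from sep_piece[OF gcont injp[OF p] this]
        show "\<exists>\<eta>>0. \<forall>x\<in>{fst p..snd p}. \<forall>x'\<in>{fst p..snd p}. d/2 \<le> \<bar>x - x'\<bar> \<longrightarrow> \<eta> \<le> \<bar>g x - g x'\<bar>" .
      qed
    qed (meson order_trans)
    then obtain \<eta> where "\<eta> > 0" "\<forall>p\<in>Pc. \<forall>x\<in>{fst p..snd p}. \<forall>x'\<in>{fst p..snd p}. d/2 \<le> \<bar>x - x'\<bar> \<longrightarrow> \<eta> \<le> \<bar>g x - g x'\<bar>" by blast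
    thus ?thesis unfolding Pgood_def by (intro exI[of _ "\<eta>/4"]) force
  qed
  have Pmono: "Pgood d e'" if "Pgood d e" "e' \<le> e" for d e e'
    using that unfolding Pgood_def by force
  define K where "K e = {n::nat. n \<le> nat \<lfloor>1/e\<rfloor> \<and> Pgood (1/(real n + 1)) e}" for e :: real
  have finK: "finite ({0} \<union> K e)" for e unfolding K_def by (auto intro: finite_subset[of _ "{..nat \<lfloor>1/e\<rfloor>}"])
  define k where "k e = Max ({0} \<union> K e)" for e
  define \<delta> where "\<delta> e = 1/(real (k e) + 1)" for e
  have dpos: "\<delta> e > 0" for e by (simp add: \<delta>_def)
  have dle1: "\<delta> e \<le> 1" for e by (simp add: \<delta>_def)
  have lim: "(\<delta> \<longlongrightarrow> 0) (at_right 0)"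
  proof (rule tendstoI)
    fix r :: real assume r: "r > 0"
    obtain N where N: "inverse (real (Suc N)) < r" using reals_Archimedean[OF r] by blast
    obtain e0 where e0: "e0 > 0" "Pgood (1/(real N + 1)) e0" using Pex[of "1/(real N + 1)"] by auto
    show "\<forall>\<^sub>F e in at_right 0. dist (\<delta> e) 0 < r"
      unfolding eventually_at_right_field
    proof (intro exI[of _ "min e0 (1/(real N + 1))"] conjI allI impI)
      show "0 < min e0 (1/(real N + 1))" using e0 by simp
      fix e :: real assume e: "0 < e" "e < min e0 (1/(real N + 1))"
      have "real N + 1 < 1/e" using e by (simp add: field_simps)
      hence "N \<le> nat \<lfloor>1/e\<rfloor>" by linarith
      moreover have "Pgood (1/(real N + 1)) e" using Pmono[OF e0(2)] e by simp
      ultimately have "N \<in> K e" by (simp add: K_def)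
      hence "N \<le> k e" unfolding k_def using finK by (intro Max_ge) auto
      hence "\<delta> e \<le> 1/(real N + 1)" unfolding \<delta>_def by (simp add: frac_le)
      also have "\<dots> < r" using N by (simp add: inverse_eq_divide add.commute)
      finally show "dist (\<delta> e) 0 < r" using dpos[of e] by simp
    qed
  qed
  define C where "C = 8 * real (card Pc)^2"
  have Cpos: "C > 0" using cardPc by (simp add: C_def)
  have main: "\<exists>S :: (real \<times> real) set. finite S \<and> real (card S) \<le> C / \<delta> e \<and>
               {(x, y). x \<in> {0..1} \<and> y \<in> {0..1} \<and> \<bar>g x - g y\<bar> < e}
                 \<subseteq> (\<Union>p\<in>S. square p (\<delta> e))" if e: "e > 0" for e
  proof -
    show ?thesis
    proof (cases "k e = 0")
      case True
      hence d1: "\<delta> e = 1" by (simp add: \<delta>_def)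
      have c1: "1 \<le> real (card Pc)" using cardPc by simp
      hence "1 \<le> real (card Pc)^2" by (simp add: one_le_power)
      hence "C \<ge> 1" by (simp add: C_def)
      moreover have "square (0, 0) 1 = {0..1} \<times> {0..1}" by (simp add: square_def)
      ultimately show ?thesis unfolding d1
        by (intro exI[of _ "{(0,0)}"]) auto
    next
      case False
      have "k e \<in> {0} \<union> K e" unfolding k_def using finK by (intro Max_in) auto
      hence "k e \<in> K e" using False by auto
      hence good: "Pgood (\<delta> e) e" by (simp add: K_def \<delta>_def)
      define d where "d = \<delta> e"
      have d: "d > 0" "d \<le> 1" using dpos dle1 by (auto simp: d_def)
      define A where "A = {(x, y). x \<in> {0..1} \<and> y \<in> {0..1} \<and> \<bar>g x - g y\<bar> < e}"
      define R where "R a b j = {q \<in> A. fst q \<in> {fst a..snd a} \<and> snd q \<in> {fst b..snd b} \<and>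
          \<lfloor>(fst q + sg a * sg b * snd q)/(d/2)\<rfloor> = j}" for a b :: "real \<times> real" and j :: int
      define lo where "lo = \<lfloor>-(2/d)\<rfloor>"
      define hi where "hi = \<lfloor>4/d\<rfloor>"
      define J where "J = {z \<in> Pc \<times> Pc \<times> {lo..hi}. R (fst z) (fst (snd z)) (snd (snd z)) \<noteq> {}}"
      define cn where "cn z = (let q = (SOME q. q \<in> R (fst z) (fst (snd z)) (snd (snd z))) in (fst q - d/2, snd q - d/2))" for z
      define S where "S = cn ` J"
      have finB: "finite (Pc \<times> Pc \<times> {lo..hi})" using finPc by simp
      have finJ: "finite J" unfolding J_def by (rule finite_subset[OF _ finB]) auto
      have finS: "finite S" unfolding S_def using finJ by simp
      have "card S \<le> card J" unfolding S_def using finJ by (rule card_image_le)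
      also have "card J \<le> card (Pc \<times> Pc \<times> {lo..hi})" unfolding J_def by (rule card_mono[OF finB]) auto
      also have "\<dots> = card Pc * (card Pc * nat (hi - lo + 1))" by (simp add: card_cartesian_product)
      finally have cSn: "card S \<le> card Pc * (card Pc * nat (hi - lo + 1))" .
      have "real (card S) \<le> real (card Pc * (card Pc * nat (hi - lo + 1)))" using cSn by (rule of_nat_mono)
      hence cS: "real (card S) \<le> real (card Pc) * (real (card Pc) * real (nat (hi - lo + 1)))" by simp
      have h1: "real_of_int hi \<le> 4/d" using floor_correct[of "4/d"] by (simp add: hi_def)
      have h2: "-(2/d) - 1 < real_of_int lo" using floor_correct[of "-(2/d)"] by (simp add: lo_def)
      have h3: "0 < 2/d" "0 < 4/d" using d by simp_all
      have "lo \<le> hi" unfolding lo_def hi_def using h3 by (intro floor_mono) linarith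
      hence h4: "real (nat (hi - lo + 1)) = real_of_int (hi - lo + 1)" by simp
      have h5: "2 \<le> 2/d" using d by (simp add: field_simps)
      have h6: "4/d + 2/d + 2/d = 8/d" by (simp add: field_simps)
      have nb: "real (nat (hi - lo + 1)) \<le> 8/d" unfolding h4 using h1 h2 h5 h6 by linarith
      have "real (card Pc) * (real (card Pc) * real (nat (hi - lo + 1))) \<le> real (card Pc) * (real (card Pc) * (8/d))"
        by (intro mult_left_mono nb) auto
      also have "\<dots> = C / d" by (simp add: C_def power2_eq_square)
      finally have cardS: "real (card S) \<le> C / d" using cS by linarith
      have covers: "A \<subseteq> (\<Union>p\<in>S. square p d)"
      proof
        fix q assume qA: "q \<in> A"
        obtain x y where q: "q = (x, y)" by (cases q)
        have xy: "x \<in> {0..1}" "y \<in> {0..1}" "\<bar>g x - g y\<bar> < e" using qA q by (auto simp: A_def)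
        obtain a where a: "a \<in> Pc" "x \<in> {fst a..snd a}" using cover xy by blast
        obtain b where b: "b \<in> Pc" "y \<in> {fst b..snd b}" using cover xy by blast
        have sa: "sg a = 1 \<or> sg a = -1" and sb: "sg b = 1 \<or> sg b = -1" using sg a b by auto
        define u where "u = x + sg a * sg b * y"
        define j where "j = \<lfloor>u/(d/2)\<rfloor>"
        have u: "-1 \<le> u" "u \<le> 2" using sa sb xy unfolding u_def by auto
        have l1: "(-1)/(d/2) \<le> u/(d/2)" using u d by (intro divide_right_mono) auto
        have l2: "u/(d/2) \<le> 2/(d/2)" using u d by (intro divide_right_mono) auto
        have "-(2/d) = (-1)/(d/2)" "4/d = 2/(d/2)" by simp_all
        hence "-(2/d) \<le> u/(d/2)" "u/(d/2) \<le> 4/d" using l1 l2 by simp_all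
        hence jr: "j \<in> {lo..hi}" unfolding j_def lo_def hi_def by (auto intro: floor_mono)
        have qR: "q \<in> R a b j" using qA q a b by (simp add: R_def j_def u_def)
        hence zJ: "(a, b, j) \<in> J" using a b jr by (auto simp: J_def)
        define q0 where "q0 = (SOME q. q \<in> R a b j)"
        have q0: "q0 \<in> R a b j" unfolding q0_def using qR by (rule someI)
        have cz: "cn (a, b, j) = (fst q0 - d/2, snd q0 - d/2)" by (simp add: cn_def q0_def Let_def)
        have q0A: "fst q0 \<in> {fst a..snd a}" "snd q0 \<in> {fst b..snd b}" "\<bar>g (fst q0) - g (snd q0)\<bar> < e"
          "\<lfloor>(fst q0 + sg a * sg b * snd q0)/(d/2)\<rfloor> = j"
          using q0 by (auto simp: R_def A_def)
        have fl: "\<bar>(x + sg a * sg b * y) - (fst q0 + sg a * sg b * snd q0)\<bar> < d/2"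
          using floor_div_close[of "x + sg a * sg b * y" "d/2" "fst q0 + sg a * sg b * snd q0"] q0A(4) d
          by (simp add: j_def u_def)
        have gp: "\<forall>x\<in>{fst p..snd p}. \<forall>x'\<in>{fst p..snd p}. d/2 \<le> \<bar>x - x'\<bar> \<longrightarrow> 2*e < \<bar>g x - g x'\<bar>" if "p \<in> Pc" for p
          using good that unfolding Pgood_def d_def by blast
        have cl: "\<bar>x - fst q0\<bar> < d/2 \<and> \<bar>y - snd q0\<bar> < d/2"
          by (rule close_both[OF sa sb _ _ gp[OF a(1)] gp[OF b(1)] d(1) a(2) q0A(1) b(2) q0A(2) xy(3) q0A(3) fl])
             (use sg a b in auto)
        have "q \<in> square (cn (a, b, j)) d" using cl unfolding cz q square_def abs_less_iff by auto
        thus "q \<in> (\<Union>p\<in>S. square p d)" using zJ unfolding S_def by blast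
      qed
      show ?thesis
        by (rule exI[of _ S]) (intro conjI finS cardS[unfolded d_def] covers[unfolded A_def d_def])
    qed
  qed
  show ?thesis
    by (intro exI[of _ C] conjI Cpos exI[of _ \<delta>] allI impI lim dpos main)
qed

end
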